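(* Consider the setting and algorithm described in the context. Let $\gamma>0$ and $K_0\ge0$ be such that for all $k\ge K_0$: $\gamma_k=\gamma$, $\delta_k=\delta:=2\nu+L_{\nabla h}+\frac{2\|A\|^2}{\gamma}$ and $\|z^{k+1}\|\le\min\left(\frac{\varepsilon}{\gamma},\sqrt{\frac{2\varepsilon}{\gamma}}\right)$. Let $0<m\le M$ be constants with $m<f(Kx^k)\le M$ for all $k\ge1$, and let $K_1\ge K_0+1$ be such that $m\le\langle Kx^k,y^k\rangle-f^*(y^k)\le f(Kx^k)\le M$ for all $k\ge K_1$. Define $\Gamma(x,y,z,u):=\frac{\Psi(x,z,u,\delta,\gamma)}{\langle Kx,y\rangle-f^*(y)}$ on $\{(x,y)\in\mathbb{R}^n\times\operatorname{dom}f^*:\langle Kx,y\rangle-f^*(y)>m/2\}\times\operatorname{dom}g^*\times\mathbb{R}^n$. Let $\theta_k$ be the scalars produced by the algorithm, $\bar\theta:=\lim_{k\to\infty}\theta_k$ (which exists), and $\Omega$ the set of accumulation points of $\{(x^k,y^k,z^k,u^k)\}$. Then: (i) there exists $c>0$ such that for all $k\ge K_1$, $\Gamma(x^{k+1},y^{k+1},z^{k+1},u^{k+1})\le\Gamma(x^k,y^k,z^k,u^k)-c\|x^k-x^{k+1}\|^2-c\|u^k-u^{k+1}\|^2-c\|z^k-z^{k+1}\|^2$; (ii) $\lim_{k\to\infty}\Gamma(x^k,y^k,z^k,u^k)$ exists and equals $\bar\theta$; (iii) $\Gamma(\bar x,\bar y,\bar z,\bar u)=\bar\theta$ for every $(\bar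 x,\bar y,\bar z,\bar u)\in\Omega$.
   Context: Setting: $\mathcal{S}\subseteq\mathbb{R}^n$ nonempty, convex, compact; $A:\mathbb{R}^n\to\mathbb{R}^s$, $K:\mathbb{R}^n\to\mathbb{R}^p$ linear with adjoints $A^*,K^*$ and operator norm $\|A\|$; $g:\mathbb{R}^s\to\mathbb{R}\cup\{+\infty\}$ proper, convex, lsc; $h:\mathbb{R}^n\to\mathbb{R}$ differentiable on an open set containing $\mathcal{S}$ with $L_{\nabla h}$-Lipschitz gradient there; $f:\mathbb{R}^p\to\mathbb{R}\cup\{+\infty\}$ proper, convex, lsc with $K(\mathcal{S})\subseteq\operatorname{int}(\operatorname{dom}f)$ and $f(Kx)>0$ on $\mathcal{S}$; $\mathcal{S}\cap A^{-1}(\operatorname{dom}g)\ne\emptyset$, $\inf_{x\in\mathcal{S}}\{g(Ax)+h(x)\}>0$; $A(\mathcal{S})\subseteq\operatorname{dom}(\partial g)$ and there is $\ell>0$ with $\operatorname{dist}(0,\partial g(Ax))\le\ell$ for all $x\in\mathcal{S}$. Notation: $f^*,g^*$ Fenchel conjugates; $\iota_{\mathcal{S}}$ indicator; $\operatorname{Proj}_{\mathcal{S}}$ projection; $\operatorname{prox}_{\varphi,\kappa}(x)=\arg\min_y\{\varphi(y)+\frac1{2\kappa}\|y-x\|^2\}$; $\Psi(x,z,u,\delta,\gamma):=\langle z,Ax\rangle-g^*(z)+h(x)+\iota_{\mathcal{S}}(x)+\frac{\delta}{2}\|x-u\|^2-\frac{\gamma}{2}\|z\|^2$. Algorithm: given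 $0<\beta<2$, $\nu>0$, $0<q<1$, $\delta_0,\theta_0>0$, $\gamma_0=1$, $\varepsilon>0$ and $(x^0,z^0,u^0)$, for $k\ge0$: choose $y^{k+1}\in\partial f(Kx^k)$; $x^{k+1}:=\operatorname{Proj}_{\mathcal{S}}(u^k+\frac{\theta_k}{\delta_k}K^*y^{k+1}-\frac1{\delta_k}\nabla h(x^k)-\frac1{\delta_k}A^*z^k)$; $u^{k+1}:=(1-\beta)u^k+\beta x^{k+1}$; take the smallest $j_k\ge0$ such that with $\gamma_{k,j_k}:=\gamma_kq^{j_k}$, $z^{k+1,j_k}:=\operatorname{prox}_{g^*,1/\gamma_{k,j_k}}(Ax^{k+1}/\gamma_{k,j_k})$ one has $\theta_{k+1}:=\Psi(x^{k+1},z^{k+1,j_k},u^{k+1},\delta_k,\gamma_{k,j_k})/f(Kx^{k+1})>0$; set $\gamma_{k+1}:=\gamma_{k,j_k}$, $\delta_{k+1}:=2\nu+L_{\nabla h}+2\|A\|^2/\gamma_{k+1}$, $z^{k+1}:=z^{k+1,j_k}$; if $\|z^{k+1}\|>\min(\varepsilon/\gamma_{k+1},\sqrt{2\varepsilon/\gamma_{k+1}})$, replace $\gamma_{k+1}$ by $\gamma_{k+1}q$ and recompute $\delta_{k+1}$ by the same formula. *)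

theory Defs
  imports "HOL-Analysis.Analysis"
begin

text \<open>Extended-real-valued functions \<open>\<real>\<^sup>d \<rightarrow> \<real> \<union> {+\<infinity>}\<close> are modelled as \<open>'a \<Rightarrow> ereal\<close>.\<close>

definition edom :: "('a \<Rightarrow> ereal) \<Rightarrow> 'a set" where
  "edom f = {x. f x < \<infinity>}"

definition eproper :: "('a \<Rightarrow> ereal) \<Rightarrow> bool" where
  "eproper f \<longleftrightarrow> (\<forall>x. f x \<noteq> -\<infinity>) \<and> edom f \<noteq> {}"

definition econvex :: "('a::real_vector \<Rightarrow> ereal) \<Rightarrow> bool" where
  "econvex f \<longleftrightarrow> (\<forall>x y t. 0 < t \<and> t < 1 \<longrightarrow>
      f ((1 - t) *\<^sub>R x + t *\<^sub>R y) \<le> ereal (1 - t) * f x + ereal t * f y)"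

definition elsc :: "('a::metric_space \<Rightarrow> ereal) \<Rightarrow> bool" where
  "elsc f \<longleftrightarrow> (\<forall>x X. X \<longlonglongrightarrow> x \<longrightarrow> f x \<le> liminf (\<lambda>n. f (X n)))"

definition fconj :: "('a::real_inner \<Rightarrow> ereal) \<Rightarrow> 'a \<Rightarrow> ereal" where
  "fconj f v = (SUP x. ereal (x \<bullet> v) - f x)"

text \<open>convex subdifferential (empty outside the domain)\<close>
definition esubdiff :: "('a::real_inner \<Rightarrow> ereal) \<Rightarrow> 'a \<Rightarrow> 'a set" where
  "esubdiff f x = {v. f x \<noteq> \<infinity> \<and> (\<forall>w. f x + ereal (v \<bullet> (w - x)) \<le> f w)}"

definition eprox :: "('a::real_normed_vector \<Rightarrow> ereal) \<Rightarrow> real \<Rightarrow> 'a \<Rightarrow> 'a" where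
  "eprox \<phi> \<kappa> x = (SOME y. \<forall>w. \<phi> y + ereal (norm (y - x)^2 / (2 * \<kappa>))
                                \<le> \<phi> w + ereal (norm (w - x)^2 / (2 * \<kappa>)))"

definition eindicator :: "'a set \<Rightarrow> 'a \<Rightarrow> ereal" where
  "eindicator S x = (if x \<in> S then 0 else \<infinity>)"

definition Psi :: "('a::real_normed_vector \<Rightarrow> 'b::real_inner) \<Rightarrow> ('b \<Rightarrow> ereal) \<Rightarrow> ('a \<Rightarrow> real)
    \<Rightarrow> 'a set \<Rightarrow> 'a \<Rightarrow> 'b \<Rightarrow> 'a \<Rightarrow> real \<Rightarrow> real \<Rightarrow> ereal" where
  "Psi A g h S x z u \<delta> \<gamma> = ereal (z \<bullet> A x) - fconj g z + ereal (h x) + eindicator S x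
      + ereal (\<delta> / 2 * norm (x - u)^2) - ereal (\<gamma> / 2 * norm z ^ 2)"

definition zstep :: "('b::real_inner \<Rightarrow> ereal) \<Rightarrow> ('a \<Rightarrow> 'b) \<Rightarrow> real \<Rightarrow> 'a \<Rightarrow> 'b" where
  "zstep g A \<gamma> x = eprox (fconj g) (1 / \<gamma>) ((1 / \<gamma>) *\<^sub>R A x)"

definition Gamma :: "('a::real_normed_vector \<Rightarrow> 'b::real_inner) \<Rightarrow> ('a \<Rightarrow> 'c::real_inner)
    \<Rightarrow> ('c \<Rightarrow> ereal) \<Rightarrow> ('b \<Rightarrow> ereal) \<Rightarrow> ('a \<Rightarrow> real) \<Rightarrow> 'a set \<Rightarrow> real \<Rightarrow> real
    \<Rightarrow> 'a \<Rightarrow> 'c \<Rightarrow> 'b \<Rightarrow> 'a \<Rightarrow> ereal" where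
  "Gamma A K f g h S \<delta> \<gamma> x y z u = Psi A g h S x z u \<delta> \<gamma> / (ereal (K x \<bullet> y) - fconj f y)"

end

theory Submission
  imports Defs
begin


lemma fconj_ge_term: "ereal (x \<bullet> v) - f x \<le> fconj f v"
  unfolding fconj_def by (rule SUP_upper) auto

lemma proper_real: assumes "eproper g" "g x \<noteq> \<infinity>" shows "g x = ereal (real_of_ereal (g x))"
  using assms unfolding eproper_def by (cases "g x") auto

lemma fconj_affine_lb:
  assumes "eproper g"
  obtains x0 c0 where "g x0 = ereal c0" "\<And>w. ereal (x0 \<bullet> w - c0) \<le> fconj g w"
proof -
  from assms obtain x0 where "g x0 < \<infinity>" unfolding eproper_def edom_def by auto
  with assms obtain c0 where c0: "g x0 = ereal c0" unfolding eproper_def by (cases "g x0") auto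
  have "ereal (x0 \<bullet> w - c0) \<le> fconj g w" for w
    using fconj_ge_term[of x0 w g] c0 by simp
  with c0 show ?thesis using that by blast
qed

lemma fconj_not_minf: assumes "eproper g" shows "fconj g w \<noteq> -\<infinity>"
proof -
  obtain x0 c0 where "\<And>w. ereal (x0 \<bullet> w - c0) \<le> fconj g w" using fconj_affine_lb[OF assms] by blast
  from this[of w] show ?thesis by auto
qed

lemma fconj_le_seq:
  assumes "eproper g" "w \<longlonglongrightarrow> wb" "\<And>n. fconj g (w n) \<le> ereal (a n)" "a \<longlonglongrightarrow> \<alpha>"
  shows "fconj g wb \<le> ereal \<alpha>"
  unfolding fconj_def
proof (rule SUP_least)
  fix x assume "x \<in> (UNIV::'a set)"
  show "ereal (x \<bullet> wb) - g x \<le> ereal \<alpha>"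
  proof (cases "g x = \<infinity>")
    case True then show ?thesis by simp
  next
    case False
    then obtain c where c: "g x = ereal c" using proper_real[OF assms(1)] by blast
    have "ereal (x \<bullet> w n - c) \<le> ereal (a n)" for n
      using fconj_ge_term[of x "w n" g] assms(3)[of n] c order_trans by fastforce
    hence "x \<bullet> w n - c \<le> a n" for n by simp
    moreover have "(\<lambda>n. x \<bullet> w n - c) \<longlonglongrightarrow> x \<bullet> wb - c"
      by (intro tendsto_intros assms(2))
    ultimately have "x \<bullet> wb - c \<le> \<alpha>" using assms(4) by (meson LIMSEQ_le)
    then show ?thesis using c by simp
  qed
qed

lemma fconj_convex:
  assumes "fconj g a = ereal Fa" "fconj g b = ereal Fb" "0 \<le> t" "t \<le> 1"
  shows "fconj g ((1 - t) *\<^sub>R a + t *\<^sub>R b) \<le> ereal ((1 - t) * Fa + t * Fb)"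
  unfolding fconj_def
proof (rule SUP_least)
  fix x assume "x \<in> (UNIV::'a set)"
  show "ereal (x \<bullet> ((1 - t) *\<^sub>R a + t *\<^sub>R b)) - g x \<le> ereal ((1 - t) * Fa + t * Fb)"
  proof (cases "g x")
    case (real c)
    have "x \<bullet> a - c \<le> Fa" using fconj_ge_term[of x a g] assms(1) real by simp
    moreover have "x \<bullet> b - c \<le> Fb" using fconj_ge_term[of x b g] assms(2) real by simp
    ultimately have "(1 - t) * (x \<bullet> a - c) + t * (x \<bullet> b - c) \<le> (1 - t) * Fa + t * Fb"
      using assms(3,4) by (intro add_mono mult_left_mono) auto
    then show ?thesis using real by (simp add: inner_add_right algebra_simps)
  next
    case PInf then show ?thesis by simp
  next
    case MInf
    have "ereal (x \<bullet> a) - g x \<le> ereal Fa" using fconj_ge_term[of x a g] assms(1) by simp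
    then show ?thesis using MInf by simp
  qed
qed



lemma sq_complete:
  fixes x0 w v :: "'a::real_inner"
  assumes "\<kappa> > 0"
  shows "x0 \<bullet> w - c0 + norm (w - v)^2 / (2*\<kappa>) =
         norm (w - (v - \<kappa> *\<^sub>R x0))^2 / (2*\<kappa>) + (x0 \<bullet> v - \<kappa> * norm x0 ^2 / 2 - c0)"
proof -
  have "norm (w - (v - \<kappa> *\<^sub>R x0))^2 = norm (w - v)^2 + 2*\<kappa>*(x0 \<bullet> (w - v)) + \<kappa>^2 * norm x0 ^2"
    unfolding power2_norm_eq_inner by (simp add: inner_simps algebra_simps power2_eq_square inner_commute)
  then show ?thesis using assms by (simp add: field_simps inner_simps power2_eq_square)
qed

lemma prox_exists:
  fixes v :: "'a::euclidean_space"
  assumes "eproper g" "\<kappa> > 0" "fconj g z1 \<noteq> \<infinity>"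
  shows "\<exists>z. \<forall>w. fconj g z + ereal (norm (z - v)^2 / (2*\<kappa>)) \<le> fconj g w + ereal (norm (w - v)^2 / (2*\<kappa>))"
proof -
  define G where "G w = fconj g w + ereal (norm (w - v)^2 / (2*\<kappa>))" for w
  obtain x0 c0 where lb: "\<And>w. ereal (x0 \<bullet> w - c0) \<le> fconj g w" using fconj_affine_lb[OF assms(1)] by blast
  define v' where "v' = v - \<kappa> *\<^sub>R x0"
  define k0 where "k0 = x0 \<bullet> v - \<kappa> * norm x0 ^2 / 2 - c0"
  have Glb: "ereal (norm (w - v')^2 / (2*\<kappa>) + k0) \<le> G w" for w
  proof -
    have "ereal (norm (w - v')^2 / (2*\<kappa>) + k0) = ereal (x0 \<bullet> w - c0) + ereal (norm (w - v)^2 / (2*\<kappa>))"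
      using sq_complete[OF assms(2), of x0 w c0 v] unfolding v'_def k0_def by simp
    also have "\<dots> \<le> G w" unfolding G_def by (intro add_right_mono lb)
    finally show ?thesis .
  qed
  have Glb0: "ereal k0 \<le> G w" for w
    using Glb[of w] by (meson ereal_less_eq(3) order_trans divide_nonneg_pos le_add_same_cancel2 zero_le_power2 assms(2) mult_pos_pos zero_less_numeral)
  define I where "I = (INF w. G w)"
  obtain F1 where F1: "fconj g z1 = ereal F1" using assms(3) fconj_not_minf[OF assms(1), of z1] by (cases "fconj g z1") auto
  have "I \<le> G z1" unfolding I_def by (rule INF_lower) auto
  also have "G z1 = ereal (F1 + norm (z1 - v)^2 / (2*\<kappa>))" unfolding G_def F1 by simp
  finally have I1: "I \<le> ereal (F1 + norm (z1 - v)^2 / (2*\<kappa>))" .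
  have I2: "ereal k0 \<le> I" unfolding I_def by (rule INF_greatest) (use Glb0 in auto)
  obtain Ir where Ir: "I = ereal Ir" using I1 I2 by (cases I) auto
  have "\<forall>n. \<exists>w. G w < ereal (Ir + 1 / (real n + 1))"
  proof
    fix n :: nat
    have "I < ereal (Ir + 1 / (real n + 1))" using Ir by simp
    then show "\<exists>w. G w < ereal (Ir + 1 / (real n + 1))" unfolding I_def by (simp add: INF_less_iff)
  qed
  then obtain w where w: "\<And>n. G (w n) < ereal (Ir + 1 / (real n + 1))" by metis
  have Fw: "fconj g (w n) \<le> ereal (Ir + 1 / (real n + 1) - norm (w n - v)^2 / (2*\<kappa>))" for n
  proof -
    have "fconj g (w n) \<noteq> \<infinity>" using w[of n] unfolding G_def by auto
    then obtain F where F: "fconj g (w n) = ereal F" using fconj_not_minf[OF assms(1), of "w n"] by (cases "fconj g (w n)") auto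
    show ?thesis using w[of n] unfolding G_def F by simp
  qed
  have bnd: "norm (w n - v')^2 \<le> 2*\<kappa>*(Ir + 1 - k0)" for n
  proof -
    have "ereal (norm (w n - v')^2 / (2*\<kappa>) + k0) < ereal (Ir + 1 / (real n + 1))"
      using Glb[of "w n"] w[of n] by (meson order_le_less_trans)
    then have "norm (w n - v')^2 / (2*\<kappa>) + k0 < Ir + 1 / (real n + 1)" by simp
    moreover have "1 / (real n + 1) \<le> 1" by (simp add: field_simps)
    ultimately have "norm (w n - v')^2 / (2*\<kappa>) \<le> Ir + 1 - k0" by linarith
    then show ?thesis using assms(2) by (simp add: field_simps)
  qed
  have "range w \<subseteq> cball v' (sqrt (2*\<kappa>*(Ir + 1 - k0)))"
  proof
    fix p assume "p \<in> range w"
    then obtain n where p: "p = w n" by auto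
    have "norm (w n - v') \<le> sqrt (2*\<kappa>*(Ir + 1 - k0))" using bnd[of n] by (simp add: real_le_rsqrt)
    then show "p \<in> cball v' (sqrt (2*\<kappa>*(Ir + 1 - k0)))" using p by (simp add: dist_norm norm_minus_commute)
  qed
  then have "bounded (range w)" using bounded_cball bounded_subset by blast
  then obtain l s where s: "strict_mono s" and ls: "(w \<circ> s) \<longlonglongrightarrow> l"
    using bounded_imp_convergent_subsequence by blast
  have inv: "(\<lambda>n. 1 / (real (s n) + 1)) \<longlonglongrightarrow> 0"
  proof -
    have "(\<lambda>n. inverse (real (Suc n))) \<longlonglongrightarrow> 0" by (rule LIMSEQ_inverse_real_of_nat)
    then have "((\<lambda>n. inverse (real (Suc n))) \<circ> s) \<longlonglongrightarrow> 0" using s by (rule LIMSEQ_subseq_LIMSEQ)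
    then show ?thesis by (simp add: o_def divide_inverse add.commute)
  qed
  have "fconj g l \<le> ereal (Ir + 0 - norm (l - v)^2 / (2*\<kappa>))"
  proof (rule fconj_le_seq[OF assms(1), of "w \<circ> s" l "\<lambda>n. Ir + 1 / (real (s n) + 1) - norm (w (s n) - v)^2 / (2*\<kappa>)"])
    show "(w \<circ> s) \<longlonglongrightarrow> l" by fact
    show "fconj g ((w \<circ> s) n) \<le> ereal (Ir + 1 / (real (s n) + 1) - (norm (w (s n) - v))\<^sup>2 / (2 * \<kappa>))" for n
      using Fw[of "s n"] by simp
    have ls': "(\<lambda>n. w (s n)) \<longlonglongrightarrow> l" using ls by (simp add: o_def)
    have nq: "(\<lambda>n. norm (w (s n) - v)^2 / (2*\<kappa>)) \<longlonglongrightarrow> norm (l - v)^2 / (2*\<kappa>)"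
      using assms(2) by (intro tendsto_intros ls') auto
    then show "(\<lambda>n. Ir + 1 / (real (s n) + 1) - (norm (w (s n) - v))\<^sup>2 / (2 * \<kappa>)) \<longlonglongrightarrow> Ir + 0 - (norm (l - v))\<^sup>2 / (2 * \<kappa>)"
      by (intro tendsto_diff tendsto_add tendsto_const inv nq)
  qed
  then have "G l \<le> I" unfolding G_def Ir using fconj_not_minf[OF assms(1), of l]
    by (cases "fconj g l") auto
  moreover have "I \<le> G w'" for w' unfolding I_def by (rule INF_lower) auto
  ultimately show ?thesis unfolding G_def by (meson order_trans)
qed



lemma norm_convex_identity:
  fixes z w v :: "'a::real_inner"
  shows "norm ((1 - t) *\<^sub>R z + t *\<^sub>R w - v)^2
      = (1 - t) * norm (z - v)^2 + t * norm (w - v)^2 - t * (1 - t) * norm (w - z)^2"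
proof -
  have e: "(1 - t) *\<^sub>R z + t *\<^sub>R w - v = (1 - t) *\<^sub>R (z - v) + t *\<^sub>R (w - v)"
    by (simp add: algebra_simps)
  have e2: "w - z = (w - v) - (z - v)" by simp
  show ?thesis unfolding e e2 unfolding power2_norm_eq_inner
    by (simp add: inner_simps algebra_simps inner_commute power2_eq_square)
qed

lemma prox_strong:
  fixes z w v :: "'a::real_inner"
  assumes min: "\<And>w. fconj g z + ereal (norm (z - v)^2 / (2*\<kappa>)) \<le> fconj g w + ereal (norm (w - v)^2 / (2*\<kappa>))"
    and Fz: "fconj g z = ereal Fz" and Fw: "fconj g w = ereal Fw" and k: "\<kappa> > 0"
  shows "Fz + norm (z - v)^2 / (2*\<kappa>) + norm (w - z)^2 / (2*\<kappa>) \<le> Fw + norm (w - v)^2 / (2*\<kappa>)"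
proof -
  define d where "d = norm (w - z)^2 / (2*\<kappa>)"
  have d0: "d \<ge> 0" unfolding d_def using k by simp
  have key: "Fz + norm (z - v)^2 / (2*\<kappa>) + (1 - t) * d \<le> Fw + norm (w - v)^2 / (2*\<kappa>)"
    if t: "0 < t" "t \<le> 1" for t
  proof -
    define wt where "wt = (1 - t) *\<^sub>R z + t *\<^sub>R w"
    have c: "fconj g wt \<le> ereal ((1 - t) * Fz + t * Fw)"
      unfolding wt_def using fconj_convex[OF Fz Fw, of t] t by simp
    have "fconj g z + ereal (norm (z - v)^2 / (2*\<kappa>)) \<le> fconj g wt + ereal (norm (wt - v)^2 / (2*\<kappa>))"
      by (rule min)
    also have "\<dots> \<le> ereal ((1 - t) * Fz + t * Fw) + ereal (norm (wt - v)^2 / (2*\<kappa>))"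
      by (intro add_right_mono c)
    finally have "Fz + norm (z - v)^2 / (2*\<kappa>) \<le> (1 - t) * Fz + t * Fw + norm (wt - v)^2 / (2*\<kappa>)"
      using Fz by simp
    moreover have "norm (wt - v)^2 = (1 - t) * norm (z - v)^2 + t * norm (w - v)^2 - t * (1 - t) * norm (w - z)^2"
      unfolding wt_def by (rule norm_convex_identity)
    ultimately have H0: "Fz + norm (z - v)^2 / (2*\<kappa>) \<le> (1 - t) * Fz + t * Fw +
        ((1 - t) * (norm (z - v)^2 / (2*\<kappa>)) + t * (norm (w - v)^2 / (2*\<kappa>)) - t * (1 - t) * d)"
      unfolding d_def by (simp add: diff_divide_distrib add_divide_distrib)
    define A where "A = norm (z - v)^2 / (2*\<kappa>)"
    define B where "B = norm (w - v)^2 / (2*\<kappa>)"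
    have H: "Fz + A \<le> (1 - t) * Fz + t * Fw + ((1 - t) * A + t * B - t * (1 - t) * d)"
      using H0 unfolding A_def B_def .
    have "t * (Fz + A + (1 - t) * d) \<le> t * (Fw + B)"
      using H by (simp add: algebra_simps)
    then have "t * (Fz + norm (z - v)^2 / (2*\<kappa>) + (1 - t) * d) \<le> t * (Fw + norm (w - v)^2 / (2*\<kappa>))"
      unfolding A_def B_def .
    then show ?thesis using t by simp
  qed
  have "Fz + norm (z - v)^2 / (2*\<kappa>) + d \<le> Fw + norm (w - v)^2 / (2*\<kappa>) + e" if e: "e > 0" for e
  proof -
    define t where "t = min 1 (e / (d + 1))"
    have t: "0 < t" "t \<le> 1" unfolding t_def using e d0 by auto
    have "t * d \<le> e / (d + 1) * d" unfolding t_def using d0 by (intro mult_right_mono) auto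
    also have "\<dots> \<le> e" using e d0 by (simp add: field_simps)
    finally have "t * d \<le> e" .
    with key[OF t] show ?thesis by (simp add: algebra_simps)
  qed
  then show ?thesis unfolding d_def by (rule field_le_epsilon)
qed



lemma fy_eq:
  assumes "y \<in> esubdiff f p"
  shows "fconj f y = ereal (p \<bullet> y) - f p"
proof (rule antisym)
  have fp: "f p \<noteq> \<infinity>" and sub: "\<And>w. f p + ereal (y \<bullet> (w - p)) \<le> f w"
    using assms unfolding esubdiff_def by auto
  show "fconj f y \<le> ereal (p \<bullet> y) - f p"
    unfolding fconj_def
  proof (rule SUP_least)
    fix w assume "w \<in> (UNIV :: 'a set)"
    show "ereal (w \<bullet> y) - f w \<le> ereal (p \<bullet> y) - f p"
    proof (cases "f p")
      case (real c)
      have "ereal (c + y \<bullet> (w - p)) \<le> f w" using sub[of w] real by simp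
      then show ?thesis using real
        by (cases "f w") (auto simp: inner_simps inner_commute)
    next
      case PInf then show ?thesis using fp by simp
    next
      case MInf then show ?thesis by simp
    qed
  qed
  show "ereal (p \<bullet> y) - f p \<le> fconj f y" by (rule fconj_ge_term)
qed

lemma descent:
  fixes h :: "'a::real_inner \<Rightarrow> real"
  assumes U: "open U" "convex S" "S \<subseteq> U"
    and der: "\<forall>w\<in>U. (h has_derivative (\<lambda>v. gradh w \<bullet> v)) (at w)"
    and lip: "\<forall>w\<in>U. \<forall>w'\<in>U. norm (gradh w - gradh w') \<le> L * norm (w - w')"
    and xy: "x \<in> S" "y \<in> S"
  shows "h y \<le> h x + gradh x \<bullet> (y - x) + L / 2 * norm (y - x)^2"
proof -
  define d where "d = y - x"
  define \<phi> where "\<phi> t = h (x + t *\<^sub>R d) - t * (gradh x \<bullet> d) - L / 2 * t^2 * norm d ^2" for t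
  have "\<phi> 1 \<le> \<phi> 0"
  proof (rule DERIV_nonpos_imp_nonincreasing[of 0 1])
    fix t :: real assume t: "0 \<le> t" "t \<le> 1"
    have inS: "x + t *\<^sub>R d \<in> S"
    proof -
      have "x + t *\<^sub>R d = (1 - t) *\<^sub>R x + t *\<^sub>R y" unfolding d_def by (simp add: algebra_simps)
      then show ?thesis using convexD_alt[OF U(2) xy, of t] t by simp
    qed
    then have inU: "x + t *\<^sub>R d \<in> U" using U(3) by auto
    have hd: "(h has_derivative (\<lambda>v. gradh (x + t *\<^sub>R d) \<bullet> v)) (at (x + t *\<^sub>R d))"
      using der inU by auto
    have ld: "((\<lambda>s. x + s *\<^sub>R d) has_derivative (\<lambda>s. s *\<^sub>R d)) (at t)"
      by (auto intro!: derivative_eq_intros)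
    have c: "((\<lambda>s. h (x + s *\<^sub>R d)) has_derivative (\<lambda>s. gradh (x + t *\<^sub>R d) \<bullet> (s *\<^sub>R d))) (at t)"
      using has_derivative_compose[OF ld hd] .
    define D where "D = gradh (x + t *\<^sub>R d) \<bullet> d - gradh x \<bullet> d - L * t * norm d ^2"
    have c': "DERIV (\<lambda>s. h (x + s *\<^sub>R d)) t :> gradh (x + t *\<^sub>R d) \<bullet> d"
      unfolding has_field_derivative_def
      by (rule has_derivative_eq_rhs[OF c]) (auto simp: fun_eq_iff inner_simps)
    have "DERIV \<phi> t :> D"
      unfolding \<phi>_def D_def
      by (auto intro!: derivative_eq_intros c' simp: algebra_simps power2_eq_square)
    moreover have "D \<le> 0"
    proof -
      have "gradh (x + t *\<^sub>R d) \<bullet> d - gradh x \<bullet> d = (gradh (x + t *\<^sub>R d) - gradh x) \<bullet> d"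
        by (simp add: inner_simps)
      also have "\<dots> \<le> norm (gradh (x + t *\<^sub>R d) - gradh x) * norm d" by (rule norm_cauchy_schwarz)
      also have "\<dots> \<le> (L * norm (t *\<^sub>R d)) * norm d"
        using lip inU U(3) xy(1) by (intro mult_right_mono) force+
      also have "\<dots> = L * t * norm d ^2" using t by (simp add: power2_eq_square)
      finally show ?thesis unfolding D_def by simp
    qed
    ultimately show "\<exists>y. DERIV \<phi> t :> y \<and> y \<le> 0" by blast
  qed simp
  then show ?thesis unfolding \<phi>_def d_def by simp
qed



lemma sq_expand:
  fixes z a :: "'a::real_inner"
  assumes "\<gamma> > 0"
  shows "norm (z - (1/\<gamma>) *\<^sub>R a)^2 / (2*(1/\<gamma>)) = \<gamma>/2 * norm z^2 - z \<bullet> a + norm a^2/(2*\<gamma>)"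
proof -
  have "norm (z - (1/\<gamma>) *\<^sub>R a)^2 = norm z^2 - 2/\<gamma> * (z \<bullet> a) + norm a^2/\<gamma>^2"
    unfolding power2_norm_eq_inner by (simp add: inner_simps inner_commute power2_eq_square)
  then show ?thesis using assms by (simp add: field_simps power2_eq_square)
qed

lemma zopt:
  fixes x :: "'a::euclidean_space" and A :: "'a \<Rightarrow> 'b::euclidean_space"
  assumes g: "eproper g" and gam: "\<gamma> > 0"
    and Gz: "fconj g (zstep g A \<gamma> x) = ereal Gz" and Fw: "fconj g w = ereal Fw"
  shows "w \<bullet> A x - Fw - \<gamma>/2 * norm w^2 + \<gamma>/2 * norm (w - zstep g A \<gamma> x)^2
         \<le> zstep g A \<gamma> x \<bullet> A x - Gz - \<gamma>/2 * norm (zstep g A \<gamma> x)^2"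
proof -
  define z where "z = zstep g A \<gamma> x"
  define v where "v = (1/\<gamma>) *\<^sub>R A x"
  have k: "1/\<gamma> > 0" using gam by simp
  have ex: "\<exists>z. \<forall>w. fconj g z + ereal (norm (z - v)^2 / (2*(1/\<gamma>))) \<le> fconj g w + ereal (norm (w - v)^2 / (2*(1/\<gamma>)))"
    by (rule prox_exists[OF g k, of "zstep g A \<gamma> x"]) (use Gz in auto)
  have zmin: "\<forall>w. fconj g z + ereal (norm (z - v)^2 / (2*(1/\<gamma>))) \<le> fconj g w + ereal (norm (w - v)^2 / (2*(1/\<gamma>)))"
    unfolding z_def zstep_def eprox_def v_def[symmetric] by (rule someI_ex[OF ex])
  have "Gz + norm (z - v)^2 / (2*(1/\<gamma>)) + norm (w - z)^2 / (2*(1/\<gamma>)) \<le> Fw + norm (w - v)^2 / (2*(1/\<gamma>))"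
    by (rule prox_strong[OF _ Gz[folded z_def] Fw k]) (use zmin in auto)
  moreover have "norm (w - z)^2 / (2*(1/\<gamma>)) = \<gamma>/2 * norm (w - z)^2" by simp
  ultimately show ?thesis unfolding z_def[symmetric] v_def sq_expand[OF gam] by (simp add: algebra_simps)
qed

lemma Psi_real:
  assumes "x \<in> S" "fconj g z = ereal G"
  shows "Psi A g h S x z u d c = ereal (z \<bullet> A x - G + h x + d/2 * norm (x - u)^2 - c/2 * norm z^2)"
  using assms unfolding Psi_def eindicator_def by simp

lemma Psi_conj_finite:
  assumes "x \<in> S" "eproper g" "Psi A g h S x z u d c \<noteq> -\<infinity>"
  shows "fconj g z = ereal (real_of_ereal (fconj g z))"
proof (cases "fconj g z")
  case PInf
  then have "Psi A g h S x z u d c = -\<infinity>" using assms(1) unfolding Psi_def eindicator_def by simp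
  then show ?thesis using assms(3) by simp
qed (use fconj_not_minf[OF assms(2)] in auto)

lemma Bseq_diff2:
  fixes f g :: "nat \<Rightarrow> real"
  assumes "Bseq f" "Bseq g" shows "Bseq (\<lambda>n. f n - g n)"
proof -
  obtain K1 where K1: "\<forall>n. norm (f n) \<le> K1" using assms(1) by (auto elim: BseqE)
  obtain K2 where K2: "\<forall>n. norm (g n) \<le> K2" using assms(2) by (auto elim: BseqE)
  show ?thesis
  proof (rule BseqI')
    fix n show "norm (f n - g n) \<le> K1 + K2" using K1 K2 by (smt (verit) real_norm_def)
  qed
qed

lemma Bseq_plus2:
  fixes f g :: "nat \<Rightarrow> real"
  assumes "Bseq f" "Bseq g" shows "Bseq (\<lambda>n. f n + g n)"
proof -
  obtain K1 where K1: "\<forall>n. norm (f n) \<le> K1" using assms(1) by (auto elim: BseqE)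
  obtain K2 where K2: "\<forall>n. norm (g n) \<le> K2" using assms(2) by (auto elim: BseqE)
  show ?thesis
  proof (rule BseqI')
    fix n show "norm (f n + g n) \<le> K1 + K2" using K1 K2 by (smt (verit) real_norm_def)
  qed
qed

lemma young4:
  fixes a b \<gamma> :: real assumes "\<gamma> > 0"
  shows "a * b \<le> \<gamma>/4 * a^2 + b^2/\<gamma>"
proof -
  have "0 \<le> (\<gamma> * a - 2 * b)^2 / (4*\<gamma>)" using assms by simp
  also have "\<dots> = \<gamma>/4 * a^2 + b^2/\<gamma> - a * b" using assms by (simp add: field_simps power2_eq_square)
  finally show ?thesis by simp
qed



theorem theorem5p4:
  fixes S :: "'a::euclidean_space set"
    and A :: "'a \<Rightarrow> 'b::euclidean_space" and K :: "'a \<Rightarrow> 'c::euclidean_space"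
    and g :: "'b \<Rightarrow> ereal" and f :: "'c \<Rightarrow> ereal"
    and h :: "'a \<Rightarrow> real" and gradh :: "'a \<Rightarrow> 'a" and U :: "'a set" and L :: real
    and ell \<beta> \<nu> q \<delta>0 \<theta>0 \<epsilon> :: real
    and x u :: "nat \<Rightarrow> 'a" and y :: "nat \<Rightarrow> 'c" and z :: "nat \<Rightarrow> 'b"
    and \<theta> gam del :: "nat \<Rightarrow> real" and j :: "nat \<Rightarrow> nat"
    and \<gamma> m M :: real and K0 K1 :: nat
  assumes S: "S \<noteq> {}" "convex S" "compact S"
    and lin: "linear A" "linear K"
    and g: "eproper g" "econvex g" "elsc g"
    and h: "open U" "S \<subseteq> U" "\<forall>w\<in>U. (h has_derivative (\<lambda>v. gradh w \<bullet> v)) (at w)"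
           "\<forall>w\<in>U. \<forall>w'\<in>U. norm (gradh w - gradh w') \<le> L * norm (w - w')"
    and f: "eproper f" "econvex f" "elsc f" "K ` S \<subseteq> interior (edom f)"
           "\<forall>w\<in>S. f (K w) > 0"
    and dom: "S \<inter> A -` edom g \<noteq> {}"
    and inf_pos: "(INF w\<in>S. g (A w) + ereal (h w)) > 0"
    and subd: "\<forall>w\<in>S. esubdiff g (A w) \<noteq> {}"
    and ell: "ell > 0" "\<forall>w\<in>S. infdist 0 (esubdiff g (A w)) \<le> ell"
    and params: "0 < \<beta>" "\<beta> < 2" "\<nu> > 0" "0 < q" "q < 1" "\<delta>0 > 0" "\<theta>0 > 0" "\<epsilon> > 0"
    and init: "gam 0 = 1" "del 0 = \<delta>0" "\<theta> 0 = \<theta>0"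
    and y_step: "\<forall>k. y (Suc k) \<in> esubdiff f (K (x k))"
    and x_step: "\<forall>k. x (Suc k) = closest_point S (u k + (\<theta> k / del k) *\<^sub>R adjoint K (y (Suc k))
                    - (1 / del k) *\<^sub>R gradh (x k) - (1 / del k) *\<^sub>R adjoint A (z k))"
    and u_step: "\<forall>k. u (Suc k) = (1 - \<beta>) *\<^sub>R u k + \<beta> *\<^sub>R x (Suc k)"
    and j_ok: "\<forall>k. 0 < Psi A g h S (x (Suc k)) (zstep g A (gam k * q ^ j k) (x (Suc k)))
                        (u (Suc k)) (del k) (gam k * q ^ j k) / f (K (x (Suc k)))"
    and j_least: "\<forall>k. \<forall>i < j k. \<not> (0 < Psi A g h S (x (Suc k)) (zstep g A (gam k * q ^ i) (x (Suc k)))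
                        (u (Suc k)) (del k) (gam k * q ^ i) / f (K (x (Suc k))))"
    and \<theta>_step: "\<forall>k. ereal (\<theta> (Suc k)) = Psi A g h S (x (Suc k)) (zstep g A (gam k * q ^ j k) (x (Suc k)))
                        (u (Suc k)) (del k) (gam k * q ^ j k) / f (K (x (Suc k)))"
    and z_step: "\<forall>k. z (Suc k) = zstep g A (gam k * q ^ j k) (x (Suc k))"
    and gam_step: "\<forall>k. gam (Suc k) =
          (if norm (z (Suc k)) > min (\<epsilon> / (gam k * q ^ j k)) (sqrt (2 * \<epsilon> / (gam k * q ^ j k)))
           then gam k * q ^ j k * q else gam k * q ^ j k)"
    and del_step: "\<forall>k. del (Suc k) = 2 * \<nu> + L + 2 * (onorm A)^2 / gam (Suc k)"
    and \<gamma>: "\<gamma> > 0"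
    and K0: "\<forall>k\<ge>K0. gam k = \<gamma> \<and> del k = 2 * \<nu> + L + 2 * (onorm A)^2 / \<gamma>
                  \<and> norm (z (Suc k)) \<le> min (\<epsilon> / \<gamma>) (sqrt (2 * \<epsilon> / \<gamma>))"
    and mM: "0 < m" "m \<le> M" "\<forall>k\<ge>1. ereal m < f (K (x k)) \<and> f (K (x k)) \<le> ereal M"
    and K1: "K1 \<ge> K0 + 1"
           "\<forall>k\<ge>K1. ereal m \<le> ereal (K (x k) \<bullet> y k) - fconj f (y k)
                   \<and> ereal (K (x k) \<bullet> y k) - fconj f (y k) \<le> f (K (x k)) \<and> f (K (x k)) \<le> ereal M"
  shows "(\<exists>c>0. \<forall>k\<ge>K1.
            Gamma A K f g h S (2 * \<nu> + L + 2 * (onorm A)^2 / \<gamma>) \<gamma> (x (Suc k)) (y (Suc k)) (z (Suc k)) (u (Suc k))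
            \<le> Gamma A K f g h S (2 * \<nu> + L + 2 * (onorm A)^2 / \<gamma>) \<gamma> (x k) (y k) (z k) (u k)
               - ereal (c * norm (x k - x (Suc k))^2) - ereal (c * norm (u k - u (Suc k))^2)
               - ereal (c * norm (z k - z (Suc k))^2))
       \<and> (\<exists>\<theta>bar. \<theta> \<longlonglongrightarrow> \<theta>bar
            \<and> (\<lambda>k. Gamma A K f g h S (2 * \<nu> + L + 2 * (onorm A)^2 / \<gamma>) \<gamma> (x k) (y k) (z k) (u k))
                 \<longlonglongrightarrow> ereal \<theta>bar
            \<and> (\<forall>r xb yb zb ub. strict_mono r \<and> (\<lambda>k. x (r k)) \<longlonglongrightarrow> xb \<and> (\<lambda>k. y (r k)) \<longlonglongrightarrow> yb
                  \<and> (\<lambda>k. z (r k)) \<longlonglongrightarrow> zb \<and> (\<lambda>k. u (r k)) \<longlonglongrightarrow> ub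
                \<longrightarrow> Gamma A K f g h S (2 * \<nu> + L + 2 * (onorm A)^2 / \<gamma>) \<gamma> xb yb zb ub = ereal \<theta>bar))"
proof -
  define \<delta> where "\<delta> = 2 * \<nu> + L + 2 * (onorm A)^2 / \<gamma>"
  have closedS: "closed S" using S(3) compact_imp_closed by blast
  have xS: "x (Suc k) \<in> S" for k using x_step closest_point_in_set[OF closedS S(1)] by simp
  have xS1: "k \<ge> 1 \<Longrightarrow> x k \<in> S" for k using xS[of "k - 1"] by simp
  have blA: "bounded_linear A" and blK: "bounded_linear K" using lin linear_conv_bounded_linear by auto
  have L0: "L \<ge> 0"
  proof -
    obtain w where w: "w \<in> S" using S(1) by blast
    then have "w \<in> U" using h(2) by auto
    then obtain e where e: "e > 0" "ball w e \<subseteq> U" using h(1) openE by blast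
    obtain b :: 'a where b: "b \<in> Basis" using nonempty_Basis by blast
    define w' where "w' = w + (e/2) *\<^sub>R b"
    have nb: "norm (w' - w) = e/2" unfolding w'_def using b e by simp
    have "w' \<in> ball w e" using nb e by (simp add: dist_norm norm_minus_commute)
    then have "w' \<in> U" using e by auto
    have "norm (gradh w' - gradh w) \<le> L * norm (w' - w)" using h(4) \<open>w \<in> U\<close> \<open>w' \<in> U\<close> by blast
    then have "norm (gradh w' - gradh w) \<le> L * (e/2)" using nb by simp
    then have "0 \<le> L * (e/2)" by (rule order_trans[OF norm_ge_zero])
    then show ?thesis using e by (simp add: zero_le_mult_iff)
  qed
  have \<delta>pos: "\<delta> > 0" unfolding \<delta>_def using L0 params(3) \<gamma> by (simp add: add_pos_nonneg)
  have K0': "gam k = \<gamma> \<and> del k = \<delta> \<and> j k = 0 \<and> z (Suc k) = zstep g A \<gamma> (x (Suc k))" if k: "k \<ge> K0" for k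
  proof -
    have g1: "gam k = \<gamma>" "del k = \<delta>" using K0[rule_format, OF k] unfolding \<delta>_def by auto
    have g2: "gam (Suc k) = \<gamma>" using K0[rule_format, of "Suc k"] k by auto
    have j0: "j k = 0"
    proof (rule ccontr)
      assume "j k \<noteq> 0"
      then obtain i where i: "j k = Suc i" by (cases "j k") auto
      have qi: "q ^ i \<le> 1" "0 \<le> q ^ i" using params(4,5) by (simp_all add: power_le_one)
      have "q * q ^ i \<le> q * 1" by (rule mult_left_mono[OF qi(1)]) (use params(4) in simp)
      then have qj: "q ^ j k < 1" unfolding i using params(5) by simp
      have qj0: "0 \<le> q ^ j k" using params(4) by simp
      have "q ^ j k * q \<le> q ^ j k" by (rule mult_right_le_one_le[OF qj0]) (use params(4,5) in auto)
      then have qj2: "q ^ j k * q < 1" using qj by simp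
      have c1: "\<gamma> * q ^ j k < \<gamma>" using \<gamma> qj by simp
      have c2: "\<gamma> * q ^ j k * q < \<gamma>" using \<gamma> qj2 by (simp add: mult.assoc)
      have disj: "\<And>a c b d. a = (if c then b else d) \<Longrightarrow> a = b \<or> a = d" by auto
      have "gam (Suc k) = gam k * q ^ j k * q \<or> gam (Suc k) = gam k * q ^ j k"
        by (rule disj[OF gam_step[rule_format, of k]])
      then show False using c1 c2 qj qj2 unfolding g1 g2 by auto
    qed
    show ?thesis using g1 j0 z_step by simp
  qed
  define fK where "fK k = real_of_ereal (f (K (x k)))" for k
  have fK: "f (K (x k)) = ereal (fK k) \<and> m < fK k \<and> fK k \<le> M" if "k \<ge> 1" for k
  proof -
    have "ereal m < f (K (x k))" "f (K (x k)) \<le> ereal M" using mM(3) that by auto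
    then show ?thesis unfolding fK_def by (cases "f (K (x k))") auto
  qed
  define gz where "gz k = real_of_ereal (fconj g (z k))" for k
  define P where "P k = z k \<bullet> A (x k) - gz k + h (x k) + \<delta>/2 * norm (x k - u k)^2 - \<gamma>/2 * norm (z k)^2" for k
  have \<theta>pos: "\<theta> (Suc k) > 0" for k
  proof -
    have "0 < ereal (\<theta> (Suc k))" by (subst \<theta>_step[rule_format]) (rule j_ok[rule_format])
    then show ?thesis by simp
  qed
  have hP: "fconj g (z k) = ereal (gz k) \<and> \<theta> k = P k / fK k \<and> P k > 0" if k: "k \<ge> K0 + 1" for k
  proof -
    obtain k' where k': "k = Suc k'" "k' \<ge> K0" using k by (cases k) auto
    have e: "ereal (\<theta> k) = Psi A g h S (x k) (z k) (u k) \<delta> \<gamma> / ereal (fK k)"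
      using \<theta>_step[rule_format, of k'] K0'[OF k'(2)] fK[of k] k'(1) by simp
    have fKp: "fK k > 0" using fK[of k] k mM(1) by auto
    have kk1: "1 \<le> k" using k by simp
    have nm: "Psi A g h S (x k) (z k) (u k) \<delta> \<gamma> \<noteq> -\<infinity>"
    proof
      assume "Psi A g h S (x k) (z k) (u k) \<delta> \<gamma> = -\<infinity>"
      then show False using e fKp by simp
    qed
    have gzk: "fconj g (z k) = ereal (gz k)" unfolding gz_def
      by (rule Psi_conj_finite[OF xS1[OF kk1] g(1) nm])
    have "Psi A g h S (x k) (z k) (u k) \<delta> \<gamma> = ereal (P k)"
      unfolding P_def by (rule Psi_real[OF xS1[OF kk1] gzk])
    then have th: "\<theta> k = P k / fK k" using e fKp by simp
    moreover have "\<theta> k > 0" using \<theta>pos k'(1) by simp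
    ultimately have "P k > 0" using fKp by (simp add: zero_less_divide_iff)
    then show ?thesis using gzk th by simp
  qed
  define fs where "fs k = real_of_ereal (fconj f (y k))" for k
  define Dn where "Dn k = K (x k) \<bullet> y k - fs k" for k
  have hD: "fconj f (y k) = ereal (fs k) \<and> m \<le> Dn k \<and> Dn k \<le> fK k" if k: "k \<ge> K1" for k
  proof -
    have k1: "k \<ge> 1" using k K1(1) by simp
    have a: "ereal m \<le> ereal (K (x k) \<bullet> y k) - fconj f (y k)"
      "ereal (K (x k) \<bullet> y k) - fconj f (y k) \<le> ereal (fK k)"
      using K1(2) k fK[OF k1] by auto
    then show ?thesis unfolding fs_def Dn_def by (cases "fconj f (y k)") auto
  qed
  have FY: "fs (Suc k) = K (x k) \<bullet> y (Suc k) - fK k" if k: "Suc k \<ge> K1" "k \<ge> 1" for k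
  proof -
    have "fconj f (y (Suc k)) = ereal (K (x k) \<bullet> y (Suc k)) - ereal (fK k)"
      using fy_eq[OF y_step[rule_format, of k]] fK[OF k(2)] by simp
    then show ?thesis using hD[OF k(1)] by simp
  qed
  have Gam: "Gamma A K f g h S \<delta> \<gamma> (x k) (y k) (z k) (u k) = ereal (P k / Dn k)" if k: "k \<ge> K1" for k
  proof -
    have k1: "k \<ge> K0 + 1" "k \<ge> 1" using k K1(1) by auto
    have "Psi A g h S (x k) (z k) (u k) \<delta> \<gamma> = ereal (P k)"
      unfolding P_def using Psi_real[OF xS1 conjunct1[OF hP]] k1 by auto
    moreover have "Dn k > 0" using hD[OF k] mM(1) by auto
    ultimately show ?thesis unfolding Gamma_def using hD[OF k] unfolding Dn_def by simp
  qed
  have step: "P (Suc k) \<le> \<theta> k * Dn (Suc k) - \<nu> * norm (x k - x (Suc k))^2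
      - \<gamma>/4 * norm (z k - z (Suc k))^2 - \<delta> * (2 - \<beta>) / (2 * \<beta>) * norm (u k - u (Suc k))^2"
    if k: "k \<ge> K1" for k
  proof -
    have k1: "k \<ge> K0 + 1" "k \<ge> 1" "k \<ge> K0" "Suc k \<ge> K1" "Suc k \<ge> K0 + 1" using k K1(1) by auto
    obtain k' where k': "k = Suc k'" "k' \<ge> K0" using k1 by (cases k) auto
    let ?p = "x (Suc k)" and ?xk = "x k" and ?uk = "u k" and ?zk = "z k" and ?z' = "z (Suc k)"
      and ?y' = "y (Suc k)" and ?u' = "u (Suc k)"
    have xkS: "?xk \<in> S" using xS1 k1 by auto
    define X2 where "X2 = norm (?p - ?xk)^2"
    define U0 where "U0 = norm (?p - ?uk)^2"
    define Uk where "Uk = norm (?xk - ?uk)^2"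
    define Z2 where "Z2 = norm (?z' - ?zk)^2"
    define Gr where "Gr = gradh ?xk"
    have dk: "del k = \<delta>" using K0'[OF k1(3)] by simp
    define a where "a = ?uk + (\<theta> k / \<delta>) *\<^sub>R adjoint K ?y' - (1 / \<delta>) *\<^sub>R Gr - (1 / \<delta>) *\<^sub>R adjoint A ?zk"
    have pa: "?p = closest_point S a" using x_step dk unfolding a_def Gr_def by simp
    have "inner (a - ?p) (?xk - ?p) \<le> 0" unfolding pa by (rule closest_point_dot[OF S(2) closedS xkS])
    moreover have "inner (a - ?p) (?xk - ?p) = (?uk - ?p) \<bullet> (?xk - ?p)
       + (1/\<delta>) * (\<theta> k * (K ?xk \<bullet> ?y' - K ?p \<bullet> ?y') - Gr \<bullet> (?xk - ?p) - (?zk \<bullet> A ?xk - ?zk \<bullet> A ?p))"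
      unfolding a_def using lin
      by (simp add: inner_simps adjoint_clauses linear_diff algebra_simps inner_commute)
    moreover have "(?uk - ?p) \<bullet> (?xk - ?p) = (X2 + U0 - Uk) / 2"
    proof -
      have "?xk - ?uk = (?xk - ?p) - (?uk - ?p)" by simp
      then have "Uk = norm (?xk - ?p)^2 + norm (?uk - ?p)^2 - 2 * ((?uk - ?p) \<bullet> (?xk - ?p))"
        unfolding Uk_def power2_norm_eq_inner by (simp add: inner_simps inner_commute)
      then show ?thesis unfolding X2_def U0_def by (simp add: norm_minus_commute)
    qed
    ultimately have E1: "\<delta> * (X2 + U0 - Uk) / 2 + (\<theta> k * (K ?xk \<bullet> ?y' - K ?p \<bullet> ?y') - Gr \<bullet> (?xk - ?p) - (?zk \<bullet> A ?xk - ?zk \<bullet> A ?p)) \<le> 0"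
    proof -
      assume a1: "inner (a - ?p) (?xk - ?p) \<le> 0" and a2: "inner (a - ?p) (?xk - ?p) = (?uk - ?p) \<bullet> (?xk - ?p)
       + (1/\<delta>) * (\<theta> k * (K ?xk \<bullet> ?y' - K ?p \<bullet> ?y') - Gr \<bullet> (?xk - ?p) - (?zk \<bullet> A ?xk - ?zk \<bullet> A ?p))"
        and a3: "(?uk - ?p) \<bullet> (?xk - ?p) = (X2 + U0 - Uk) / 2"
      define Q where "Q = \<theta> k * (K ?xk \<bullet> ?y' - K ?p \<bullet> ?y') - Gr \<bullet> (?xk - ?p) - (?zk \<bullet> A ?xk - ?zk \<bullet> A ?p)"
      have "(X2 + U0 - Uk) / 2 + (1/\<delta>) * Q \<le> 0" using a1 a2 a3 unfolding Q_def by simp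
      then have "\<delta> * ((X2 + U0 - Uk) / 2 + (1/\<delta>) * Q) \<le> 0" using \<delta>pos by (simp add: mult_nonneg_nonpos)
      then show ?thesis using \<delta>pos unfolding Q_def[symmetric] by (simp add: algebra_simps)
    qed
    have E2: "h ?p \<le> h ?xk + Gr \<bullet> (?p - ?xk) + L / 2 * X2"
      unfolding Gr_def X2_def by (rule descent[OF h(1) S(2) h(2) h(3) h(4) xkS xS])
    have E2': "Gr \<bullet> (?p - ?xk) = - (Gr \<bullet> (?xk - ?p))" by (simp add: inner_simps)
    have E3: "Dn (Suc k) = K ?p \<bullet> ?y' - K ?xk \<bullet> ?y' + fK k"
      unfolding Dn_def using FY[OF k1(4) k1(2)] by simp
    have zk: "?zk = zstep g A \<gamma> ?xk" using K0'[OF k'(2)] k'(1) by simp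
    have gzk: "fconj g ?zk = ereal (gz k)" using hP[OF k1(1)] by simp
    have gz': "fconj g ?z' = ereal (gz (Suc k))" using hP[OF k1(5)] by simp
    have E4: "?z' \<bullet> A ?xk - gz (Suc k) - \<gamma>/2 * norm ?z'^2 + \<gamma>/2 * Z2 \<le> ?zk \<bullet> A ?xk - gz k - \<gamma>/2 * norm ?zk^2"
      using zopt[OF g(1) \<gamma> gzk[unfolded zk] gz'] unfolding zk[symmetric] Z2_def .
    have E5: "?z' \<bullet> A ?p - ?z' \<bullet> A ?xk - ?zk \<bullet> A ?p + ?zk \<bullet> A ?xk \<le> \<gamma>/4 * Z2 + (onorm A)^2 / \<gamma> * X2"
    proof -
      have "?z' \<bullet> A ?p - ?z' \<bullet> A ?xk - ?zk \<bullet> A ?p + ?zk \<bullet> A ?xk = (?z' - ?zk) \<bullet> A (?p - ?xk)"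
        using lin by (simp add: inner_simps linear_diff)
      also have "\<dots> \<le> norm (?z' - ?zk) * norm (A (?p - ?xk))" by (rule norm_cauchy_schwarz)
      also have "\<dots> \<le> norm (?z' - ?zk) * (onorm A * norm (?p - ?xk))"
        by (intro mult_left_mono onorm[OF blA]) auto
      also have "\<dots> \<le> \<gamma>/4 * norm (?z' - ?zk)^2 + (onorm A * norm (?p - ?xk))^2 / \<gamma>"
        by (rule young4[OF \<gamma>])
      finally show ?thesis unfolding Z2_def X2_def by (simp add: power_mult_distrib)
    qed
    have E6a: "norm (?p - ?u')^2 = (1 - \<beta>)^2 * U0"
    proof -
      have "?p - ?u' = (1 - \<beta>) *\<^sub>R (?p - ?uk)" using u_step by (simp add: algebra_simps)
      then show ?thesis unfolding U0_def by (simp add: power_mult_distrib)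
    qed
    have E6b: "norm (?uk - ?u')^2 = \<beta>^2 * U0"
    proof -
      have "?uk - ?u' = \<beta> *\<^sub>R (?uk - ?p)" using u_step by (simp add: algebra_simps)
      then show ?thesis unfolding U0_def using params(1) by (simp add: power_mult_distrib norm_minus_commute)
    qed
    have Pk: "\<theta> k * fK k = P k" using hP[OF k1(1)] fK[OF k1(2)] mM(1) by auto
    have P': "P (Suc k) = ?z' \<bullet> A ?p - gz (Suc k) + h ?p + \<delta>/2 * ((1 - \<beta>)^2 * U0) - \<gamma>/2 * norm ?z'^2"
      unfolding P_def E6a[symmetric] ..
    have PK: "P k = ?zk \<bullet> A ?xk - gz k + h ?xk + \<delta>/2 * Uk - \<gamma>/2 * norm ?zk^2"
      unfolding P_def Uk_def ..
    have dd: "\<delta> / 2 = \<nu> + L / 2 + (onorm A)^2 / \<gamma>" unfolding \<delta>_def by simp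
    have T1: "\<theta> k * Dn (Suc k) = \<theta> k * (K ?p \<bullet> ?y') - \<theta> k * (K ?xk \<bullet> ?y') + P k"
      unfolding E3 Pk[symmetric] by (simp add: algebra_simps)
    have dX: "\<delta>/2 * X2 = \<nu> * X2 + L/2 * X2 + (onorm A)^2 / \<gamma> * X2" unfolding dd by (simp add: algebra_simps)
    have main: "P (Suc k) \<le> \<theta> k * Dn (Suc k) - \<nu> * X2 - \<gamma>/4 * Z2 - \<delta>/2 * (2 * \<beta> - \<beta>^2) * U0"
    proof -
      have q1: "\<delta> * (X2 + U0 - Uk) / 2 = \<delta>/2 * X2 + \<delta>/2 * U0 - \<delta>/2 * Uk" by (simp add: field_simps)
      have q2: "\<theta> k * (K ?xk \<bullet> ?y' - K ?p \<bullet> ?y') = \<theta> k * (K ?xk \<bullet> ?y') - \<theta> k * (K ?p \<bullet> ?y')"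
        by (simp add: right_diff_distrib)
      have q3: "\<delta>/2 * ((1 - \<beta>)^2 * U0) = \<delta>/2 * U0 - \<delta>/2 * (2 * \<beta> - \<beta>^2) * U0"
        by (simp add: algebra_simps power2_eq_square)
      have q4: "\<gamma>/2 * Z2 = \<gamma>/4 * Z2 + \<gamma>/4 * Z2" by simp
      show ?thesis using E1 E2 E2' T1 E4 E5 P' PK dX q1 q2 q3 q4 by linarith
    qed
    have "\<delta>/2 * (2 * \<beta> - \<beta>^2) * U0 = \<delta> * (2 - \<beta>) / (2 * \<beta>) * norm (?uk - ?u')^2"
      unfolding E6b using params(1) by (simp add: field_simps power2_eq_square)
    then show ?thesis using main unfolding X2_def Z2_def by (simp add: norm_minus_commute)
  qed
  define G where "G k = P k / Dn k" for k
  define c3 where "c3 = \<delta> * (2 - \<beta>) / (2 * \<beta>)"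
  have c3pos: "c3 > 0" unfolding c3_def using \<delta>pos params(1,2) by simp
  have Mpos: "M > 0" using mM(1,2) by simp
  define c where "c = min \<nu> (min (\<gamma>/4) c3) / M"
  have cpos: "c > 0" unfolding c_def using params(3) \<gamma> c3pos Mpos by simp
  have thG: "\<theta> k \<le> G k" if k: "k \<ge> K1" for k
  proof -
    have k1: "k \<ge> K0 + 1" "k \<ge> 1" using k K1(1) by auto
    have Dp: "0 < Dn k" "Dn k \<le> fK k" using hD[OF k] mM(1) by auto
    have "P k / fK k \<le> P k / Dn k"
      by (rule divide_left_mono) (use Dp hP[OF k1(1)] in auto)
    then show ?thesis unfolding G_def using hP[OF k1(1)] by simp
  qed
  have Gstep: "G (Suc k) \<le> \<theta> k - c * norm (x k - x (Suc k))^2 - c * norm (u k - u (Suc k))^2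
                 - c * norm (z k - z (Suc k))^2" if k: "k \<ge> K1" for k
  proof -
    define X where "X = norm (x k - x (Suc k))^2"
    define Uu where "Uu = norm (u k - u (Suc k))^2"
    define Z where "Z = norm (z k - z (Suc k))^2"
    define E where "E = \<nu> * X + \<gamma>/4 * Z + c3 * Uu"
    have k': "Suc k \<ge> K1" "Suc k \<ge> 1" using k by auto
    have Dp: "0 < Dn (Suc k)" "Dn (Suc k) \<le> M" using hD[OF k'(1)] fK[OF k'(2)] mM(1) by auto
    have E0: "E \<ge> 0" unfolding E_def X_def Z_def Uu_def using params(3) \<gamma> c3pos by simp
    have st: "P (Suc k) \<le> \<theta> k * Dn (Suc k) - E"
      using step[OF k] unfolding E_def X_def Z_def Uu_def c3_def by simp
    then have "P (Suc k) / Dn (Suc k) \<le> (\<theta> k * Dn (Suc k) - E) / Dn (Suc k)"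
      using Dp by (simp add: divide_right_mono)
    also have "\<dots> = \<theta> k - E / Dn (Suc k)" using Dp by (simp add: field_simps)
    also have "E / M \<le> E / Dn (Suc k)" by (rule divide_left_mono) (use Dp E0 in auto)
    then have "\<theta> k - E / Dn (Suc k) \<le> \<theta> k - E / M" by simp
    finally have g1: "G (Suc k) \<le> \<theta> k - E / M" unfolding G_def .
    have "c * X \<le> \<nu> / M * X" unfolding c_def X_def using Mpos
      by (intro mult_right_mono divide_right_mono) auto
    moreover have "c * Z \<le> \<gamma> / 4 / M * Z" unfolding c_def Z_def using Mpos
      by (intro mult_right_mono divide_right_mono) auto
    moreover have "c * Uu \<le> c3 / M * Uu" unfolding c_def Uu_def using Mpos
      by (intro mult_right_mono divide_right_mono) auto
    moreover have "E / M = \<nu> / M * X + \<gamma> / 4 / M * Z + c3 / M * Uu"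
      unfolding E_def by (simp add: add_divide_distrib)
    ultimately show ?thesis using g1 unfolding X_def Uu_def Z_def by linarith
  qed
  have GleT: "G (Suc k) \<le> \<theta> k" if k: "k \<ge> K1" for k
    using Gstep[OF k] cpos by (smt (verit) mult_nonneg_nonneg zero_le_power2)
  have Gam_eq: "Gamma A K f g h S (2 * \<nu> + L + 2 * (onorm A)^2 / \<gamma>) \<gamma> (x k) (y k) (z k) (u k) = ereal (G k)"
    if k: "k \<ge> K1" for k
    using Gam[OF k] unfolding \<delta>_def G_def .
  have part1: "\<exists>c>0. \<forall>k\<ge>K1.
            Gamma A K f g h S (2 * \<nu> + L + 2 * (onorm A)^2 / \<gamma>) \<gamma> (x (Suc k)) (y (Suc k)) (z (Suc k)) (u (Suc k))
            \<le> Gamma A K f g h S (2 * \<nu> + L + 2 * (onorm A)^2 / \<gamma>) \<gamma> (x k) (y k) (z k) (u k)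
               - ereal (c * norm (x k - x (Suc k))^2) - ereal (c * norm (u k - u (Suc k))^2)
               - ereal (c * norm (z k - z (Suc k))^2)"
  proof (intro exI[of _ c] conjI allI impI cpos)
    fix k assume k: "K1 \<le> k"
    have "G (Suc k) \<le> G k - c * norm (x k - x (Suc k))^2 - c * norm (u k - u (Suc k))^2
                 - c * norm (z k - z (Suc k))^2" using Gstep[OF k] thG[OF k] by linarith
    then show "Gamma A K f g h S (2 * \<nu> + L + 2 * (onorm A)^2 / \<gamma>) \<gamma> (x (Suc k)) (y (Suc k)) (z (Suc k)) (u (Suc k))
            \<le> Gamma A K f g h S (2 * \<nu> + L + 2 * (onorm A)^2 / \<gamma>) \<gamma> (x k) (y k) (z k) (u k)
               - ereal (c * norm (x k - x (Suc k))^2) - ereal (c * norm (u k - u (Suc k))^2)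
               - ereal (c * norm (z k - z (Suc k))^2)"
      unfolding Gam_eq[OF k] Gam_eq[OF le_SucI[OF k]] by simp
  qed
  have thdec: "\<theta> (Suc k) \<le> \<theta> k" if "k \<ge> K1" for k
    using thG[of "Suc k"] GleT[of k] that by force
  have "decseq (\<lambda>n. \<theta> (n + K1))" by (rule decseq_SucI) (simp add: thdec)
  moreover have "\<forall>i. 0 \<le> \<theta> (i + K1)"
  proof
    fix i have "K1 \<ge> 1" using K1(1) by simp
    then obtain i' where "i + K1 = Suc i'" by (cases "i + K1") auto
    then show "0 \<le> \<theta> (i + K1)" using \<theta>pos[of i'] by simp
  qed
  ultimately obtain \<theta>bar where tb: "(\<lambda>n. \<theta> (n + K1)) \<longlonglongrightarrow> \<theta>bar" by (rule decseq_convergent)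
  have thlim: "\<theta> \<longlonglongrightarrow> \<theta>bar" using LIMSEQ_offset[OF tb] .
  have thlim1: "(\<lambda>n. \<theta> (n - 1)) \<longlonglongrightarrow> \<theta>bar"
    by (rule LIMSEQ_offset[where k=1]) (simp add: thlim)
  have Glim: "G \<longlonglongrightarrow> \<theta>bar"
  proof (rule tendsto_sandwich[OF _ _ thlim thlim1])
    show "eventually (\<lambda>n. \<theta> n \<le> G n) sequentially"
      unfolding eventually_sequentially using thG by blast
    show "eventually (\<lambda>n. G n \<le> \<theta> (n - 1)) sequentially"
      unfolding eventually_sequentially
    proof (intro exI[of _ "Suc K1"] allI impI)
      fix n assume n: "Suc K1 \<le> n"
      then obtain n' where "n = Suc n'" "n' \<ge> K1" by (cases n) auto
      then show "G n \<le> \<theta> (n - 1)" using GleT by simp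
    qed
  qed
  have Gamlim: "(\<lambda>k. Gamma A K f g h S (2 * \<nu> + L + 2 * (onorm A)^2 / \<gamma>) \<gamma> (x k) (y k) (z k) (u k))
                 \<longlonglongrightarrow> ereal \<theta>bar"
  proof (rule Lim_transform_eventually)
    show "(\<lambda>k. ereal (G k)) \<longlonglongrightarrow> ereal \<theta>bar" using Glim by (rule tendsto_ereal)
    show "eventually (\<lambda>k. ereal (G k) = Gamma A K f g h S (2 * \<nu> + L + 2 * (onorm A)^2 / \<gamma>) \<gamma> (x k) (y k) (z k) (u k)) sequentially"
      unfolding eventually_sequentially using Gam_eq by (metis)
  qed
  have part3: "\<forall>r xb yb zb ub. strict_mono r \<and> (\<lambda>k. x (r k)) \<longlonglongrightarrow> xb \<and> (\<lambda>k. y (r k)) \<longlonglongrightarrow> yb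
                  \<and> (\<lambda>k. z (r k)) \<longlonglongrightarrow> zb \<and> (\<lambda>k. u (r k)) \<longlonglongrightarrow> ub
                \<longrightarrow> Gamma A K f g h S (2 * \<nu> + L + 2 * (onorm A)^2 / \<gamma>) \<gamma> xb yb zb ub = ereal \<theta>bar"
  proof (intro allI impI)
    fix r :: "nat \<Rightarrow> nat" and xb yb zb ub
    assume asm: "strict_mono r \<and> (\<lambda>k. x (r k)) \<longlonglongrightarrow> xb \<and> (\<lambda>k. y (r k)) \<longlonglongrightarrow> yb
                  \<and> (\<lambda>k. z (r k)) \<longlonglongrightarrow> zb \<and> (\<lambda>k. u (r k)) \<longlonglongrightarrow> ub"
    define N where "N = K1 + 1"
    have rmono: "strict_mono r" using asm by blast
    have sub: "\<And>(w :: nat \<Rightarrow> 'd::topological_space) l (\<sigma> :: nat \<Rightarrow> nat). (\<lambda>k. w (r k)) \<longlonglongrightarrow> l \<Longrightarrow> strict_mono \<sigma> \<Longrightarrow> (\<lambda>n. w (r (\<sigma> n + N))) \<longlonglongrightarrow> l"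
    proof -
      fix w :: "nat \<Rightarrow> 'd::topological_space" and l and \<sigma> :: "nat \<Rightarrow> nat"
      assume a: "(\<lambda>k. w (r k)) \<longlonglongrightarrow> l" "strict_mono \<sigma>"
      have "(\<lambda>n. w (r (n + N))) \<longlonglongrightarrow> l" using LIMSEQ_ignore_initial_segment[OF a(1)] .
      from LIMSEQ_subseq_LIMSEQ[OF this a(2)] show "(\<lambda>n. w (r (\<sigma> n + N))) \<longlonglongrightarrow> l" by (simp add: o_def)
    qed
    have rge: "r (i + N) \<ge> K1 + 1" for i using seq_suble[OF rmono, of "i + N"] unfolding N_def by simp
    have hcont: "isCont h xb" if "xb \<in> S"
      using h(3) h(2) that has_derivative_continuous by blast
    define a where "a n = gz (r (n + N))" for n
    define b where "b n = fs (r (n + N))" for n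
    have Gr: "(\<lambda>n. G (r (n + N))) \<longlonglongrightarrow> \<theta>bar"
    proof -
      have "(\<lambda>n. G (n + N)) \<longlonglongrightarrow> \<theta>bar" using LIMSEQ_ignore_initial_segment[OF Glim] .
      have "strict_mono (\<lambda>n. r (n + N) - N)" 
        using rmono rge unfolding strict_mono_def N_def
        by (metis add_less_cancel_right diff_less_mono le_add2 le_trans nat_add_left_cancel_less)
      have "(G \<circ> r) \<longlonglongrightarrow> \<theta>bar" using LIMSEQ_subseq_LIMSEQ[OF Glim rmono] .
      then have "(\<lambda>k. G (r k)) \<longlonglongrightarrow> \<theta>bar" by (simp add: o_def)
      then show ?thesis using LIMSEQ_ignore_initial_segment by blast
    qed
    have xS': "x (r (n + N)) \<in> S" for n using xS1[of "r (n + N)"] rge[of n] by simp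
    have xbS: "xb \<in> S"
    proof (rule closed_sequentially[OF closedS xS'])
      show "(\<lambda>n. x (r (n + N))) \<longlonglongrightarrow> xb" using LIMSEQ_ignore_initial_segment[of "\<lambda>k. x (r k)"] asm by blast
    qed
    have Ax: "(\<lambda>k. A (x (r k))) \<longlonglongrightarrow> A xb" using asm bounded_linear.tendsto[OF blA] by blast
    have Kx: "(\<lambda>k. K (x (r k))) \<longlonglongrightarrow> K xb" using asm bounded_linear.tendsto[OF blK] by blast
    have hx: "(\<lambda>k. h (x (r k))) \<longlonglongrightarrow> h xb" using asm isCont_tendsto_compose[OF hcont[OF xbS]] by blast
    have Qconv: "(\<lambda>k. z (r k) \<bullet> A (x (r k)) + h (x (r k)) + \<delta>/2 * norm (x (r k) - u (r k))^2 - \<gamma>/2 * norm (z (r k))^2)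
        \<longlonglongrightarrow> zb \<bullet> A xb + h xb + \<delta>/2 * norm (xb - ub)^2 - \<gamma>/2 * norm zb^2"
      using asm Ax hx by (intro tendsto_intros) auto
    have Dbd: "norm (Dn (r (n + N))) \<le> M" for n
      using hD[of "r (n + N)"] fK[of "r (n + N)"] rge[of n] mM(1) by auto
    have BD: "Bseq (\<lambda>n. Dn (r (n + N)))" by (rule BseqI'[OF Dbd])
    have BG: "Bseq (\<lambda>n. G (r (n + N)))" using Gr convergentI convergent_imp_Bseq by blast
    have PG: "P (r (n + N)) = G (r (n + N)) * Dn (r (n + N))" for n
      using hD[of "r (n + N)"] rge[of n] mM(1) unfolding G_def by auto
    have Ba: "Bseq a"
    proof -
      have B1: "Bseq (\<lambda>n. z (r (n + N)) \<bullet> A (x (r (n + N))) + h (x (r (n + N))) + \<delta>/2 * norm (x (r (n + N)) - u (r (n + N)))^2 - \<gamma>/2 * norm (z (r (n + N)))^2)"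
        using LIMSEQ_ignore_initial_segment[OF Qconv] convergentI convergent_imp_Bseq by blast
      have eqa: "(\<lambda>n. (z (r (n + N)) \<bullet> A (x (r (n + N))) + h (x (r (n + N))) + \<delta>/2 * norm (x (r (n + N)) - u (r (n + N)))^2 - \<gamma>/2 * norm (z (r (n + N)))^2)
          - G (r (n + N)) * Dn (r (n + N))) = a"
      proof
        fix n show "(z (r (n + N)) \<bullet> A (x (r (n + N))) + h (x (r (n + N))) + \<delta>/2 * norm (x (r (n + N)) - u (r (n + N)))^2 - \<gamma>/2 * norm (z (r (n + N)))^2)
          - G (r (n + N)) * Dn (r (n + N)) = a n"
          unfolding a_def PG[of n, symmetric] P_def by simp
      qed
      show ?thesis using Bseq_diff2[OF B1 Bseq_mult[OF BG BD]] unfolding eqa .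
    qed
    have Bb: "Bseq b"
    proof -
      have "(\<lambda>k. K (x (r k)) \<bullet> y (r k)) \<longlonglongrightarrow> K xb \<bullet> yb" using asm Kx by (intro tendsto_intros) auto
      then have "Bseq (\<lambda>n. K (x (r (n + N))) \<bullet> y (r (n + N)))"
        using LIMSEQ_ignore_initial_segment convergentI convergent_imp_Bseq by blast
      from Bseq_diff2[OF this BD] show ?thesis unfolding b_def Dn_def by simp
    qed
    obtain \<alpha> s1 where s1: "strict_mono s1" "(a \<circ> s1) \<longlonglongrightarrow> \<alpha>"
      using bounded_imp_convergent_subsequence[of a] Ba Bseq_eq_bounded by blast
    have "Bseq (b \<circ> s1)" using Bb unfolding Bseq_def by auto
    then obtain \<beta>' s2 where s2: "strict_mono s2" "((b \<circ> s1) \<circ> s2) \<longlonglongrightarrow> \<beta>'"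
      using bounded_imp_convergent_subsequence[of "b \<circ> s1"] Bseq_eq_bounded by blast
    define \<sigma> where "\<sigma> = s1 \<circ> s2"
    have \<sigma>: "strict_mono \<sigma>" unfolding \<sigma>_def using strict_mono_o s1(1) s2(1) by blast
    define t where "t n = r (\<sigma> n + N)" for n
    have tge: "t n \<ge> K1 + 1" for n unfolding t_def by (rule rge)
    have at: "(\<lambda>n. gz (t n)) \<longlonglongrightarrow> \<alpha>"
      using LIMSEQ_subseq_LIMSEQ[OF s1(2) s2(1)] unfolding t_def \<sigma>_def a_def by (simp add: o_def)
    have bt: "(\<lambda>n. fs (t n)) \<longlonglongrightarrow> \<beta>'"
      using s2(2) unfolding t_def \<sigma>_def b_def by (simp add: o_def)
    have xt: "(\<lambda>n. x (t n)) \<longlonglongrightarrow> xb" unfolding t_def using sub[OF _ \<sigma>] asm by blast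
    have yt: "(\<lambda>n. y (t n)) \<longlonglongrightarrow> yb" unfolding t_def using sub[OF _ \<sigma>] asm by blast
    have zt: "(\<lambda>n. z (t n)) \<longlonglongrightarrow> zb" unfolding t_def using sub[OF _ \<sigma>] asm by blast
    have ut: "(\<lambda>n. u (t n)) \<longlonglongrightarrow> ub" unfolding t_def using sub[OF _ \<sigma>] asm by blast
    have Gt: "(\<lambda>n. G (t n)) \<longlonglongrightarrow> \<theta>bar"
      using LIMSEQ_subseq_LIMSEQ[OF Gr \<sigma>] unfolding t_def by (simp add: o_def)
    have Axt: "(\<lambda>n. A (x (t n))) \<longlonglongrightarrow> A xb" using xt bounded_linear.tendsto[OF blA] by blast
    have Kxt: "(\<lambda>n. K (x (t n))) \<longlonglongrightarrow> K xb" using xt bounded_linear.tendsto[OF blK] by blast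
    have hxt: "(\<lambda>n. h (x (t n))) \<longlonglongrightarrow> h xb" using xt isCont_tendsto_compose[OF hcont[OF xbS]] by blast
    have gzt: "fconj g (z (t n)) = ereal (gz (t n))" for n using hP[of "t n"] tge[of n] K1(1) by auto
    have g_le: "fconj g zb \<le> ereal \<alpha>"
      by (rule fconj_le_seq[OF g(1) zt _ at]) (simp add: gzt)
    obtain Fb where Fb: "fconj g zb = ereal Fb"
      using g_le fconj_not_minf[OF g(1), of zb] by (cases "fconj g zb") auto
    have Fba: "Fb \<le> \<alpha>" using g_le Fb by simp
    have aFb: "\<alpha> \<le> Fb"
    proof (rule LIMSEQ_le[OF at])
      have "(\<lambda>n. Fb + z (t n) \<bullet> A (x (t n)) - zb \<bullet> A (x (t n)) - \<gamma>/2 * norm (z (t n))^2 + \<gamma>/2 * norm zb^2)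
            \<longlonglongrightarrow> Fb + zb \<bullet> A xb - zb \<bullet> A xb - \<gamma>/2 * norm zb^2 + \<gamma>/2 * norm zb^2"
        using zt Axt by (intro tendsto_intros) auto
      then show "(\<lambda>n. Fb + z (t n) \<bullet> A (x (t n)) - zb \<bullet> A (x (t n)) - \<gamma>/2 * norm (z (t n))^2 + \<gamma>/2 * norm zb^2)
            \<longlonglongrightarrow> Fb" by simp
      show "\<exists>N. \<forall>n\<ge>N. gz (t n) \<le> Fb + z (t n) \<bullet> A (x (t n)) - zb \<bullet> A (x (t n)) - \<gamma>/2 * norm (z (t n))^2 + \<gamma>/2 * norm zb^2"
      proof (intro exI allI impI)
        fix n
        obtain k' where k': "t n = Suc k'" "k' \<ge> K0" using tge[of n] K1(1) by (cases "t n") auto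
        have zz: "z (t n) = zstep g A \<gamma> (x (t n))" using K0'[OF k'(2)] k'(1) by simp
        have "zb \<bullet> A (x (t n)) - Fb - \<gamma>/2 * norm zb^2 + \<gamma>/2 * norm (zb - z (t n))^2
              \<le> z (t n) \<bullet> A (x (t n)) - gz (t n) - \<gamma>/2 * norm (z (t n))^2"
          using zopt[OF g(1) \<gamma> gzt[of n, unfolded zz] Fb] unfolding zz[symmetric] .
        moreover have "0 \<le> \<gamma>/2 * norm (zb - z (t n))^2" using \<gamma> by simp
        ultimately show "gz (t n) \<le> Fb + z (t n) \<bullet> A (x (t n)) - zb \<bullet> A (x (t n)) - \<gamma>/2 * norm (z (t n))^2 + \<gamma>/2 * norm zb^2"
          by linarith
      qed
    qed
    have Fbeq: "fconj g zb = ereal \<alpha>" using Fb Fba aFb by simp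
    have fst: "fconj f (y (t n)) = ereal (fs (t n))" for n using hD[of "t n"] tge[of n] by auto
    have f_le: "fconj f yb \<le> ereal \<beta>'"
      by (rule fconj_le_seq[OF f(1) yt _ bt]) (simp add: fst)
    obtain Hb where Hb: "fconj f yb = ereal Hb"
      using f_le fconj_not_minf[OF f(1), of yb] by (cases "fconj f yb") auto
    have Hbb: "Hb \<le> \<beta>'" using f_le Hb by simp
    have "bounded (K ` S)" using bounded_linear_image[OF compact_imp_bounded[OF S(3)] blK] .
    then obtain B where B: "B > 0" "\<forall>v\<in>K ` S. norm v \<le> B" unfolding bounded_pos by blast
    have bHb: "\<beta>' \<le> Hb"
    proof (rule LIMSEQ_le[OF bt])
      have "(\<lambda>n. Hb + B * norm (y (t n) - yb)) \<longlonglongrightarrow> Hb + B * norm (yb - yb)"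
        using yt by (intro tendsto_intros) auto
      then show "(\<lambda>n. Hb + B * norm (y (t n) - yb)) \<longlonglongrightarrow> Hb" by simp
      show "\<exists>N. \<forall>n\<ge>N. fs (t n) \<le> Hb + B * norm (y (t n) - yb)"
      proof (intro exI allI impI)
        fix n
        obtain k' where k': "t n = Suc k'" "Suc k' \<ge> K1" "k' \<ge> 1" using tge[of n] K1(1) by (cases "t n") auto
        have fy: "fs (t n) = K (x k') \<bullet> y (t n) - fK k'" using FY[OF k'(2,3)] k'(1) by simp
        have "ereal (K (x k') \<bullet> yb) - f (K (x k')) \<le> fconj f yb" by (rule fconj_ge_term)
        then have le1: "K (x k') \<bullet> yb - fK k' \<le> Hb" using fK[OF k'(3)] Hb by simp
        have "K (x k') \<bullet> (y (t n) - yb) \<le> norm (K (x k')) * norm (y (t n) - yb)" by (rule norm_cauchy_schwarz)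
        also have "\<dots> \<le> B * norm (y (t n) - yb)"
          using B xS1[OF k'(3)] by (intro mult_right_mono) auto
        finally have "K (x k') \<bullet> (y (t n) - yb) \<le> B * norm (y (t n) - yb)" .
        then show "fs (t n) \<le> Hb + B * norm (y (t n) - yb)" using fy le1 by (simp add: inner_simps)
      qed
    qed
    have Hbeq: "fconj f yb = ereal \<beta>'" using Hb Hbb bHb by simp
    define Pb where "Pb = zb \<bullet> A xb - \<alpha> + h xb + \<delta>/2 * norm (xb - ub)^2 - \<gamma>/2 * norm zb^2"
    define Db where "Db = K xb \<bullet> yb - \<beta>'"
    have Pt: "(\<lambda>n. P (t n)) \<longlonglongrightarrow> Pb"
      unfolding P_def Pb_def using zt Axt at hxt xt ut by (intro tendsto_intros) auto
    have Dt: "(\<lambda>n. Dn (t n)) \<longlonglongrightarrow> Db"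
      unfolding Dn_def Db_def using Kxt yt bt by (intro tendsto_intros) auto
    have Dtm: "m \<le> Dn (t n)" for n using hD[of "t n"] tge[of n] by simp
    have Dbm: "m \<le> Db" by (rule LIMSEQ_le_const[OF Dt]) (use Dtm in blast)
    have "(\<lambda>n. P (t n) / Dn (t n)) \<longlonglongrightarrow> Pb / Db" using Pt Dt Dbm mM(1) by (intro tendsto_intros) auto
    then have "Pb / Db = \<theta>bar" using Gt unfolding G_def by (rule LIMSEQ_unique)
    moreover have "Gamma A K f g h S \<delta> \<gamma> xb yb zb ub = ereal (Pb / Db)"
    proof -
      have "Psi A g h S xb zb ub \<delta> \<gamma> = ereal Pb" unfolding Pb_def by (rule Psi_real[OF xbS Fbeq])
      moreover have "Db \<noteq> 0" using Dbm mM(1) by simp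
      ultimately show ?thesis unfolding Gamma_def Hbeq Db_def by simp
    qed
    ultimately show "Gamma A K f g h S (2 * \<nu> + L + 2 * (onorm A)^2 / \<gamma>) \<gamma> xb yb zb ub = ereal \<theta>bar"
      unfolding \<delta>_def by simp
  qed
  show ?thesis using part1 thlim Gamlim part3 by blast
qed


end
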